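(* Let $k,n$ be integers with $n>2$ and $k\geq 4$. If $c$ is an exact $k$-coloring of $\mathcal{B}_n$ with no rainbow induced copy of $\mathcal{B}_2$, then $k\leq \binom{n}{\lfloor n/2\rfloor}+\binom{n-1}{\lfloor (n-1)/2\rfloor}+\binom{n-2}{\lfloor (n-2)/2\rfloor}+1$.
   Context: $\mathcal{B}_n$ is the Boolean lattice of subsets of $[n]$ under inclusion. An exact $k$-coloring is a surjective map $c:\mathcal{B}_n\to[k]$. A rainbow induced copy of $\mathcal{B}_2$ is four sets $W_1\subsetneq W_2,W_3\subsetneq W_4$ with $W_2,W_3$ incomparable and pairwise distinct colors. *)

theory Defs
  imports Main
begin

text \<open>The Boolean lattice B_n is modelled as Pow {0..<n} (subsets of an n-element ground set).\<close>

definition exact_coloring :: "nat \<Rightarrow> nat \<Rightarrow> (nat set \<Rightarrow> nat) \<Rightarrow> bool" where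
  "exact_coloring n k c \<longleftrightarrow> c ` Pow {0..<n} = {1..k}"

definition rainbow_B2 :: "nat \<Rightarrow> (nat set \<Rightarrow> nat) \<Rightarrow> nat set \<Rightarrow> nat set \<Rightarrow> nat set \<Rightarrow> nat set \<Rightarrow> bool" where
  "rainbow_B2 n c W1 W2 W3 W4 \<longleftrightarrow>
     W1 \<in> Pow {0..<n} \<and> W2 \<in> Pow {0..<n} \<and> W3 \<in> Pow {0..<n} \<and> W4 \<in> Pow {0..<n} \<and>
     W1 \<subset> W2 \<and> W1 \<subset> W3 \<and> W2 \<subset> W4 \<and> W3 \<subset> W4 \<and>
     \<not> W2 \<subseteq> W3 \<and> \<not> W3 \<subseteq> W2 \<and>
     c W1 \<noteq> c W2 \<and> c W1 \<noteq> c W3 \<and> c W1 \<noteq> c W4 \<and>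
     c W2 \<noteq> c W3 \<and> c W2 \<noteq> c W4 \<and> c W3 \<noteq> c W4"

definition has_rainbow_B2 :: "nat \<Rightarrow> (nat set \<Rightarrow> nat) \<Rightarrow> bool" where
  "has_rainbow_B2 n c \<longleftrightarrow> (\<exists>W1 W2 W3 W4. rainbow_B2 n c W1 W2 W3 W4)"

end

theory Submission
  imports Defs Complex_Main "HOL-Combinatorics.Multiset_Permutations"
begin


definition pf :: "'a set \<Rightarrow> 'a set \<Rightarrow> 'a list set" where
  "pf A S = {\<sigma> \<in> permutations_of_set A. set (take (card S) \<sigma>) = S}"

lemma perm_split_card:
  fixes A Y :: "'a set"
  assumes fin: "finite A" and sub: "Y \<subseteq> A"
  shows "card {\<sigma> \<in> permutations_of_set A. set (take (card Y) \<sigma>) = Y \<and> Q (take (card Y) \<sigma>)}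
         = card {\<tau> \<in> permutations_of_set Y. Q \<tau>} * fact (card A - card Y)"
proof -
  have finY: "finite Y" using fin sub finite_subset by blast
  let ?L = "{\<tau> \<in> permutations_of_set Y. Q \<tau>}"
  let ?M = "permutations_of_set (A - Y)"
  let ?f = "\<lambda>(\<tau>::'a list, \<rho>::'a list). \<tau> @ \<rho>"
  have eq: "{\<sigma> \<in> permutations_of_set A. set (take (card Y) \<sigma>) = Y \<and> Q (take (card Y) \<sigma>)} = ?f ` (?L \<times> ?M)"
  proof
    show "?f ` (?L \<times> ?M) \<subseteq> {\<sigma> \<in> permutations_of_set A. set (take (card Y) \<sigma>) = Y \<and> Q (take (card Y) \<sigma>)}"
    proof
      fix s assume "s \<in> ?f ` (?L \<times> ?M)"
      then obtain \<tau> \<rho> where s: "s = \<tau> @ \<rho>" and t: "\<tau> \<in> ?L" and r: "\<rho> \<in> ?M" by auto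
      have lt: "length \<tau> = card Y" using t by (auto simp: permutations_of_set_def distinct_card[symmetric])
      have "set s = A" using t r sub s by (auto simp: permutations_of_set_def)
      moreover have "distinct s" using t r s by (auto simp: permutations_of_set_def)
      moreover have "take (card Y) s = \<tau>" using lt s by simp
      ultimately show "s \<in> {\<sigma> \<in> permutations_of_set A. set (take (card Y) \<sigma>) = Y \<and> Q (take (card Y) \<sigma>)}"
        using t by (auto simp: permutations_of_set_def)
    qed
  next
    show "{\<sigma> \<in> permutations_of_set A. set (take (card Y) \<sigma>) = Y \<and> Q (take (card Y) \<sigma>)} \<subseteq> ?f ` (?L \<times> ?M)"
    proof
      fix s assume s: "s \<in> {\<sigma> \<in> permutations_of_set A. set (take (card Y) \<sigma>) = Y \<and> Q (take (card Y) \<sigma>)}"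
      let ?t = "take (card Y) s" and ?r = "drop (card Y) s"
      have ds: "distinct s" and ss: "set s = A" using s by (auto simp: permutations_of_set_def)
      have st: "set ?t = Y" and q: "Q ?t" using s by auto
      have disj: "set ?t \<inter> set ?r = {}" using set_take_disj_set_drop_if_distinct[OF ds, of "card Y" "card Y"] by simp
      have un: "set ?t \<union> set ?r = A" using ss by (metis append_take_drop_id set_append)
      have "set ?r = A - Y" using disj un st by blast
      hence "?r \<in> ?M" using ds by (auto simp: permutations_of_set_def)
      moreover have "?t \<in> ?L" using st q ds by (auto simp: permutations_of_set_def)
      ultimately show "s \<in> ?f ` (?L \<times> ?M)"
        by (auto intro!: image_eqI[where x="(?t, ?r)"])
    qed
  qed
  have inj: "inj_on ?f (?L \<times> ?M)"
  proof (rule inj_onI)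
    fix p q assume p: "p \<in> ?L \<times> ?M" and q: "q \<in> ?L \<times> ?M" and e: "?f p = ?f q"
    obtain t1 r1 where p': "p = (t1, r1)" by (cases p)
    obtain t2 r2 where q': "q = (t2, r2)" by (cases q)
    have "length t1 = card Y" "length t2 = card Y" using p q p' q'
      by (auto simp: permutations_of_set_def distinct_card[symmetric])
    thus "p = q" using e p' q' by simp
  qed
  have "card (?f ` (?L \<times> ?M)) = card ?L * card ?M"
    using card_image[OF inj] card_cartesian_product by metis
  also have "card ?M = fact (card A - card Y)"
    using fin sub finY by (simp add: card_Diff_subset)
  finally show ?thesis using eq by simp
qed

lemma card_pf:
  assumes "finite A" "S \<subseteq> A"
  shows "card (pf A S) = fact (card S) * fact (card A - card S)"
proof -
  have fS: "finite S" using assms finite_subset by blast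
  have "pf A S = {\<sigma> \<in> permutations_of_set A. set (take (card S) \<sigma>) = S \<and> True}"
    by (simp add: pf_def)
  hence "card (pf A S) = card {\<tau> \<in> permutations_of_set S. True} * fact (card A - card S)"
    using perm_split_card[OF assms, of "\<lambda>_. True"] by simp
  thus ?thesis using fS by simp
qed

lemma card_pf_inter:
  assumes "finite A" "X \<subseteq> Y" "Y \<subseteq> A"
  shows "card (pf A X \<inter> pf A Y) = fact (card X) * fact (card Y - card X) * fact (card A - card Y)"
proof -
  have fY: "finite Y" using assms finite_subset by blast
  have le: "card X \<le> card Y" using assms fY card_mono by blast
  have "pf A X \<inter> pf A Y = {\<sigma> \<in> permutations_of_set A. set (take (card Y) \<sigma>) = Y \<and>
           set (take (card X) (take (card Y) \<sigma>)) = X}"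
    using le by (auto simp: pf_def min_absorb1)
  hence "card (pf A X \<inter> pf A Y) = card {\<tau> \<in> permutations_of_set Y. set (take (card X) \<tau>) = X} * fact (card A - card Y)"
    using perm_split_card[OF assms(1,3), of "\<lambda>\<tau>. set (take (card X) \<tau>) = X"] by simp
  also have "{\<tau> \<in> permutations_of_set Y. set (take (card X) \<tau>) = X} = pf Y X" by (simp add: pf_def)
  also have "card (pf Y X) = fact (card X) * fact (card Y - card X)"
    using card_pf[OF fY assms(2)] .
  finally show ?thesis .
qed

lemma pf_cmp:
  assumes "\<sigma> \<in> pf A S" "\<sigma> \<in> pf A T"
  shows "S \<subseteq> T \<or> T \<subseteq> S"
proof (cases "card S \<le> card T")
  case True
  then show ?thesis using assms set_take_subset_set_take[OF True, of \<sigma>] by (auto simp: pf_def)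
next
  case False
  hence le: "card T \<le> card S" by simp
  show ?thesis using assms set_take_subset_set_take[OF le, of \<sigma>] by (auto simp: pf_def)
qed



lemma binom_ge: "0 < j \<Longrightarrow> j < m \<Longrightarrow> m \<le> m choose j"
proof (induction m arbitrary: j)
  case 0 then show ?case by simp
next
  case (Suc m)
  then obtain j' where j: "j = Suc j'" by (cases j) auto
  show ?case
  proof (cases "j' = 0")
    case True then show ?thesis using j by simp
  next
    case False
    hence h1: "m \<le> m choose j'" using Suc j by simp
    have h2: "0 < m choose Suc j'" using Suc j by simp
    have "Suc m choose Suc j' = (m choose j') + (m choose Suc j')" by simp
    thus ?thesis using h1 h2 j by (simp only: j)
  qed
qed

lemma pf_ge_D:
  assumes "finite U" "S \<subseteq> U"
  shows "fact (card U div 2) * fact (card U - card U div 2) \<le> card (pf U S)"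
proof -
  let ?n = "card U" and ?s = "card S"
  have sle: "?s \<le> ?n" using assms card_mono by blast
  have e1: "fact ?s * fact (?n - ?s) * (?n choose ?s) = (fact ?n :: nat)"
    using binomial_fact_lemma[OF sle] .
  have e2: "fact (?n div 2) * fact (?n - ?n div 2) * (?n choose (?n div 2)) = (fact ?n :: nat)"
    using binomial_fact_lemma[of "?n div 2" ?n] by simp
  have m: "?n choose ?s \<le> ?n choose (?n div 2)" by (rule binomial_maximum)
  have pos: "0 < ?n choose ?s" using sle by simp
  have "fact (?n div 2) * fact (?n - ?n div 2) \<le> (fact ?s * fact (?n - ?s) :: nat)"
  proof (rule ccontr)
    assume "\<not> ?thesis"
    hence lt: "fact ?s * fact (?n - ?s) < (fact (?n div 2) * fact (?n - ?n div 2) :: nat)" by simp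
    have "(fact ?s * fact (?n - ?s) :: nat) * (?n choose ?s) \<le> fact ?s * fact (?n - ?s) * (?n choose (?n div 2))"
      using m by simp
    also have "\<dots> < fact (?n div 2) * fact (?n - ?n div 2) * (?n choose (?n div 2))"
      using lt m pos by simp
    finally show False using e1 e2 by simp
  qed
  thus ?thesis using card_pf[OF assms] by simp
qed

lemma pf_two:
  assumes "finite U" "X \<subseteq> Y" "Y \<subseteq> U" "0 < card X" "card X < card Y"
  shows "2 * card (pf U X \<inter> pf U Y) \<le> card (pf U Y)"
proof -
  let ?x = "card X" and ?y = "card Y" and ?n = "card U"
  have b: "fact ?x * fact (?y - ?x) * (?y choose ?x) = (fact ?y :: nat)"
    using binomial_fact_lemma assms(5) by simp
  have "?y \<le> ?y choose ?x" using binom_ge assms by simp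
  hence "2 \<le> ?y choose ?x" using assms by simp
  hence "2 * (fact ?x * fact (?y - ?x)) \<le> (fact ?x * fact (?y - ?x) :: nat) * (?y choose ?x)"
    by simp
  hence "2 * (fact ?x * fact (?y - ?x)) \<le> (fact ?y :: nat)" using b by simp
  hence "2 * (fact ?x * fact (?y - ?x)) * fact (?n - ?y) \<le> (fact ?y :: nat) * fact (?n - ?y)" by simp
  thus ?thesis using card_pf_inter[OF assms(1-3)] card_pf[OF assms(1,3)] by (simp add: mult.assoc)
qed

lemma pf_three:
  assumes "finite U" "X \<subseteq> Y" "Y \<subseteq> U" "card X < card Y" "card Y < card U" "3 \<le> card U - card X"
  shows "3 * card (pf U X \<inter> pf U Y) \<le> card (pf U X)"
proof -
  let ?x = "card X" and ?y = "card Y" and ?n = "card U"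
  have b: "fact (?y - ?x) * fact (?n - ?x - (?y - ?x)) * ((?n - ?x) choose (?y - ?x)) = (fact (?n - ?x) :: nat)"
    using binomial_fact_lemma[of "?y - ?x" "?n - ?x"] assms by simp
  have e: "?n - ?x - (?y - ?x) = ?n - ?y" using assms by simp
  have b': "fact (?y - ?x) * fact (?n - ?y) * ((?n - ?x) choose (?y - ?x)) = (fact (?n - ?x) :: nat)"
    using b by (simp only: e)
  have "?n - ?x \<le> (?n - ?x) choose (?y - ?x)" using binom_ge assms by simp
  hence "3 \<le> (?n - ?x) choose (?y - ?x)" using assms by simp
  hence "3 * (fact (?y - ?x) * fact (?n - ?y)) \<le> (fact (?y - ?x) * fact (?n - ?y) :: nat) * ((?n - ?x) choose (?y - ?x))"
    by simp
  also have "\<dots> = fact (?n - ?x)" using b' .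
  finally have "3 * (fact (?y - ?x) * fact (?n - ?y)) \<le> (fact (?n - ?x) :: nat)" .
  hence "fact ?x * (3 * (fact (?y - ?x) * fact (?n - ?y))) \<le> (fact ?x :: nat) * fact (?n - ?x)" by simp
  moreover have "X \<subseteq> U" using assms by blast
  ultimately show ?thesis using card_pf_inter[OF assms(1-3)] card_pf[OF assms(1), of X]
    by (simp add: mult.assoc mult.left_commute)
qed



lemma no_rb:
  assumes "\<not> has_rainbow_B2 n c"
    "W1 \<subseteq> {0..<n}" "W2 \<subseteq> {0..<n}" "W3 \<subseteq> {0..<n}" "W4 \<subseteq> {0..<n}"
    "W1 \<subset> W2" "W1 \<subset> W3" "W2 \<subset> W4" "W3 \<subset> W4" "\<not> W2 \<subseteq> W3" "\<not> W3 \<subseteq> W2"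
    "c W1 \<noteq> c W2" "c W1 \<noteq> c W3" "c W1 \<noteq> c W4" "c W2 \<noteq> c W3" "c W2 \<noteq> c W4" "c W3 \<noteq> c W4"
  shows False
  using assms unfolding has_rainbow_B2_def rainbow_B2_def by blast

locale setting =
  fixes n :: nat and c :: "nat set \<Rightarrow> nat" and R :: "nat set set"
  assumes norb: "\<not> has_rainbow_B2 n c"
  and R_sub: "\<And>S. S \<in> R \<Longrightarrow> S \<subseteq> {0..<n}"
  and R_col: "\<And>S. S \<in> R \<Longrightarrow> c S \<noteq> c {}"
  and ends: "c {0..<n} = c {}"
  and R_inj: "\<And>S T. S \<in> R \<Longrightarrow> T \<in> R \<Longrightarrow> S \<noteq> T \<Longrightarrow> c S \<noteq> c T"
begin

lemma R_ne: "S \<in> R \<Longrightarrow> S \<noteq> {}"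
  using R_col by blast

lemma R_nU: "S \<in> R \<Longrightarrow> S \<noteq> {0..<n}"
  using R_col ends by metis

lemma R_psub: "S \<in> R \<Longrightarrow> S \<subset> {0..<n}"
  using R_sub R_nU by blast

lemma noV:
  assumes "S \<in> R" "T1 \<in> R" "T2 \<in> R" "S \<subset> T1" "S \<subset> T2"
  shows "T1 \<subseteq> T2 \<or> T2 \<subseteq> T1"
proof (rule ccontr)
  assume h: "\<not> (T1 \<subseteq> T2 \<or> T2 \<subseteq> T1)"
  hence d: "T1 \<noteq> T2" by blast
  show False
    apply (rule no_rb[OF norb, of S T1 T2 "{0..<n}"])
    using assms h R_sub[OF assms(1)] R_psub[OF assms(2)] R_psub[OF assms(3)] R_inj[OF assms(1,2)] R_inj[OF assms(1,3)]
      R_inj[OF assms(2,3) d] R_col[OF assms(1)] R_col[OF assms(2)] R_col[OF assms(3)] ends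
    by auto
qed

lemma noL:
  assumes "S \<in> R" "T1 \<in> R" "T2 \<in> R" "T1 \<subset> S" "T2 \<subset> S"
  shows "T1 \<subseteq> T2 \<or> T2 \<subseteq> T1"
proof (rule ccontr)
  assume h: "\<not> (T1 \<subseteq> T2 \<or> T2 \<subseteq> T1)"
  hence d: "T1 \<noteq> T2" by blast
  have e1: "c S \<noteq> c T1" using R_inj[OF assms(1,2)] assms(4) by blast
  have e2: "c S \<noteq> c T2" using R_inj[OF assms(1,3)] assms(5) by blast
  show False
    apply (rule no_rb[OF norb, of "{}" T1 T2 S])
    using e1 e2
    using assms h R_sub[OF assms(1)] R_ne[OF assms(2)] R_ne[OF assms(3)]
      R_inj[OF assms(2,3) d] R_col[OF assms(1)] R_col[OF assms(2)] R_col[OF assms(3)]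
    by auto
qed

lemma cmp_trans:
  assumes "S \<in> R" "T \<in> R" "W \<in> R" "S \<subseteq> T \<or> T \<subseteq> S" "T \<subseteq> W \<or> W \<subseteq> T"
  shows "S \<subseteq> W \<or> W \<subseteq> S"
proof -
  consider "S \<subseteq> T" "T \<subseteq> W" | "S \<subseteq> T" "W \<subseteq> T" | "T \<subseteq> S" "T \<subseteq> W" | "T \<subseteq> S" "W \<subseteq> T"
    using assms by blast
  then show ?thesis
  proof cases
    case 1 then show ?thesis by blast
  next
    case 2
    show ?thesis
    proof (cases "S = T \<or> W = T")
      case True then show ?thesis using 2 by blast
    next
      case False
      then show ?thesis using noL[OF assms(2,1,3)] 2 by blast
    qed
  next
    case 3
    show ?thesis
    proof (cases "S = T \<or> W = T")
      case True then show ?thesis using 3 by blast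
    next
      case False
      then show ?thesis using noV[OF assms(2,1,3)] 3 by blast
    qed
  next
    case 4 then show ?thesis by blast
  qed
qed

lemma trip:
  assumes "X \<in> R" "Y \<in> R" "V \<in> R" "X \<subset> Y" "Y \<subset> V"
    "X \<subseteq> Z" "Z \<subseteq> V" "\<not> Z \<subseteq> Y" "\<not> Y \<subseteq> Z"
  shows "c Z = c Y"
proof (rule ccontr)
  assume ne: "c Z \<noteq> c Y"
  have XY: "c X \<noteq> c Y" "c X \<noteq> c V" "c Y \<noteq> c V"
    using R_inj assms by blast+
  have XZ: "X \<subset> Z" using assms by blast
  have ZV: "Z \<subset> V" using assms by blast
  have ZU: "Z \<subseteq> {0..<n}" using assms R_sub by blast
  have Zne: "Z \<noteq> {}" using assms R_ne by blast
  consider "c Z = c X" | "c Z = c V" | "c Z \<noteq> c X" "c Z \<noteq> c V" by blast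
  then show False
  proof cases
    case 1
    show False
      apply (rule no_rb[OF norb, of "{}" Y Z V])
      using assms R_sub[OF assms(3)] R_ne[OF assms(2)] R_col[OF assms(1)] R_col[OF assms(2)] R_col[OF assms(3)]
        XY ne 1 ZU Zne ZV by auto
  next
    case 2
    show False
      apply (rule no_rb[OF norb, of X Y Z "{0..<n}"])
      using assms R_sub[OF assms(1)] R_psub[OF assms(2)] R_col[OF assms(1)] R_col[OF assms(2)] R_col[OF assms(3)]
         ends XY ne 2 ZU XZ ZV R_psub[OF assms(3)] by auto
  next
    case 3
    show False
      apply (rule no_rb[OF norb, of X Y Z V])
      using assms R_sub[OF assms(1)] R_sub[OF assms(2)] R_sub[OF assms(3)] XY ne 3 ZU XZ ZV by auto
  qed
qed

lemma no4:
  assumes "X0 \<in> R" "X1 \<in> R" "X2 \<in> R" "X3 \<in> R" "X0 \<subset> X1" "X1 \<subset> X2" "X2 \<subset> X3"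
  shows False
proof -
  define Z where "Z = X0 \<union> (X2 - X1)"
  define Z' where "Z' = X1 \<union> (X3 - X2)"
  have cZ: "c Z = c X1"
    by (rule trip[OF assms(1,2,3,5,6)]) (use assms in \<open>auto simp: Z_def\<close>)
  have cZ': "c Z' = c X2"
    by (rule trip[OF assms(2,3,4,6,7)]) (use assms in \<open>auto simp: Z'_def\<close>)
  have d: "c X0 \<noteq> c X1" "c X0 \<noteq> c X2" "c X0 \<noteq> c X3" "c X1 \<noteq> c X2" "c X1 \<noteq> c X3" "c X2 \<noteq> c X3"
    using R_inj assms by blast+
  obtain y where y: "y \<in> X2" "y \<notin> X1" using assms by blast
  obtain z where z: "z \<in> X3" "z \<notin> X2" using assms by blast
  show False
    apply (rule no_rb[OF norb, of X0 Z Z' X3])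
    using assms R_sub[OF assms(4)] d cZ cZ' y z unfolding Z_def Z'_def by auto
qed

end



lemma chain_list:
  assumes "finite K" "\<And>A B. A \<in> K \<Longrightarrow> B \<in> K \<Longrightarrow> A \<subseteq> B \<or> B \<subseteq> A" "\<And>A. A \<in> K \<Longrightarrow> finite A"
  shows "\<exists>xs. set xs = K \<and> sorted_wrt (\<subset>) xs"
  using assms
proof (induction "card K" arbitrary: K)
  case 0
  then show ?case by (intro exI[of _ "[]"]) simp
next
  case (Suc m)
  have finK: "finite K" and ch: "\<And>A B. A \<in> K \<Longrightarrow> B \<in> K \<Longrightarrow> A \<subseteq> B \<or> B \<subseteq> A"
    and fe: "\<And>A. A \<in> K \<Longrightarrow> finite A" using Suc.prems by blast+
  have ne: "K \<noteq> {}" using Suc.hyps(2) by auto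
  have "Max (card ` K) \<in> card ` K" using Max_in[of "card ` K"] finK ne by simp
  then obtain M where M: "M \<in> K" "card M = Max (card ` K)" by auto
  have Mmax: "T \<subseteq> M" if T: "T \<in> K" for T
  proof (rule ccontr)
    assume nT: "\<not> T \<subseteq> M"
    have le: "card T \<le> card M" using M finK T by simp
    have "M \<subseteq> T" using ch[OF T M(1)] nT by blast
    hence "M \<subset> T" using nT by blast
    hence "card M < card T" using psubset_card_mono[OF fe[OF T]] by blast
    thus False using le by simp
  qed
  let ?K = "K - {M}"
  have cK: "m = card ?K" using Suc.hyps(2) M(1) finK by simp
  have "\<exists>xs. set xs = ?K \<and> sorted_wrt (\<subset>) xs"
  proof (rule Suc.hyps(1)[OF cK])
    show "finite ?K" using finK by blast
    show "\<And>A B. A \<in> ?K \<Longrightarrow> B \<in> ?K \<Longrightarrow> A \<subseteq> B \<or> B \<subseteq> A" using ch by blast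
    show "\<And>A. A \<in> ?K \<Longrightarrow> finite A" using fe by blast
  qed
  then obtain xs where xs: "set xs = ?K" "sorted_wrt (\<subset>) xs" by blast
  have "sorted_wrt (\<subset>) (xs @ [M])"
    using xs Mmax by (auto simp: sorted_wrt_append)
  moreover have "set (xs @ [M]) = K" using xs M by auto
  ultimately show ?case by blast
qed

context setting
begin

definition K where "K S = {T \<in> R. S \<subseteq> T \<or> T \<subseteq> S}"

lemma finR: "finite R"
proof -
  have "R \<subseteq> Pow {0..<n}" using R_sub by blast
  thus ?thesis using finite_subset by blast
qed

lemma K_sub: "K S \<subseteq> R" by (auto simp: K_def)
lemma K_self: "S \<in> R \<Longrightarrow> S \<in> K S" by (auto simp: K_def)

lemma K_eq:
  assumes "S \<in> R" "T \<in> K S"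
  shows "K T = K S"
proof -
  have T: "T \<in> R" "S \<subseteq> T \<or> T \<subseteq> S" using assms by (auto simp: K_def)
  show ?thesis
  proof
    show "K T \<subseteq> K S"
    proof
      fix W assume "W \<in> K T"
      hence W: "W \<in> R" "T \<subseteq> W \<or> W \<subseteq> T" by (auto simp: K_def)
      have "S \<subseteq> W \<or> W \<subseteq> S" using cmp_trans[OF assms(1) T(1) W(1) T(2) W(2)] .
      thus "W \<in> K S" using W by (auto simp: K_def)
    qed
  next
    show "K S \<subseteq> K T"
    proof
      fix W assume "W \<in> K S"
      hence W: "W \<in> R" "S \<subseteq> W \<or> W \<subseteq> S" by (auto simp: K_def)
      have "T \<subseteq> W \<or> W \<subseteq> T" using cmp_trans[OF T(1) assms(1) W(1) _ W(2)] T(2) by blast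
      thus "W \<in> K T" using W by (auto simp: K_def)
    qed
  qed
qed

lemma K_chain:
  assumes "S \<in> R" "A \<in> K S" "B \<in> K S"
  shows "A \<subseteq> B \<or> B \<subseteq> A"
proof -
  have A: "A \<in> R" "A \<subseteq> S \<or> S \<subseteq> A" and B: "B \<in> R" "S \<subseteq> B \<or> B \<subseteq> S"
    using assms by (auto simp: K_def)
  show ?thesis using cmp_trans[OF A(1) assms(1) B(1) A(2) B(2)] .
qed

lemma K_list:
  assumes "S \<in> R"
  shows "\<exists>xs. set xs = K S \<and> sorted_wrt (\<subset>) xs \<and> length xs \<le> 3 \<and> distinct xs"
proof -
  have fin: "finite (K S)" using finR K_sub finite_subset by blast
  have "\<And>A. A \<in> K S \<Longrightarrow> finite A"
    using K_sub R_sub finite_subset by (meson finite_atLeastLessThan subsetD)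
  then obtain xs where xs: "set xs = K S" "sorted_wrt (\<subset>) xs"
    using chain_list[OF fin K_chain[OF assms]] by blast
  have d: "distinct xs"
    unfolding distinct_conv_nth
  proof (intro allI impI)
    fix i j assume ij: "i < length xs" "j < length xs" "i \<noteq> j"
    show "xs ! i \<noteq> xs ! j"
    proof (cases "i < j")
      case True
      then show ?thesis using sorted_wrt_nth_less[OF xs(2) True ij(2)] by blast
    next
      case False
      hence ji: "j < i" using ij by simp
      show ?thesis using sorted_wrt_nth_less[OF xs(2) ji ij(1)] by blast
    qed
  qed
  have "length xs \<le> 3"
  proof (rule ccontr)
    assume "\<not> length xs \<le> 3"
    hence l: "3 < length xs" by simp
    have m: "\<And>i. i < length xs \<Longrightarrow> xs ! i \<in> R" using xs(1) K_sub by (metis nth_mem subsetD)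
    have a: "xs!0 \<subset> xs!1" using sorted_wrt_nth_less[OF xs(2), of 0 1] l by simp
    have b: "xs!1 \<subset> xs!2" using sorted_wrt_nth_less[OF xs(2), of 1 2] l by simp
    have c: "xs!2 \<subset> xs!3" using sorted_wrt_nth_less[OF xs(2), of 2 3] l by simp
    have m0: "xs!0 \<in> R" by (rule m) (use l in linarith)
    have m1: "xs!1 \<in> R" by (rule m) (use l in linarith)
    have m2: "xs!2 \<in> R" by (rule m) (use l in linarith)
    have m3: "xs!3 \<in> R" by (rule m) (use l in linarith)
    show False
      using no4[OF m0 m1 m2 m3 a b c] .
  qed
  thus ?thesis using xs d by blast
qed

end



context setting
begin

abbreviation "U \<equiv> {0..<n}"
abbreviation "DD \<equiv> fact (n div 2) * fact (n - n div 2) :: nat"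

lemma pfD: "S \<in> R \<Longrightarrow> DD \<le> card (pf U S)"
  using pf_ge_D[of U S] R_sub by simp

lemma comp_count:
  assumes "S \<in> R"
  shows "11 * card (K S) * DD \<le> 18 * card (\<Union>T\<in>K S. pf U T)"
proof -
  obtain xs where xs: "set xs = K S" "sorted_wrt (\<subset>) xs" "length xs \<le> 3" "distinct xs"
    using K_list[OF assms] by blast
  have ck: "card (K S) = length xs" using xs distinct_card by metis
  have inR: "\<And>T. T \<in> set xs \<Longrightarrow> T \<in> R" using xs(1) K_sub by blast
  have ne: "xs \<noteq> []" using xs(1) K_self[OF assms] by auto
  have finU: "finite U" by simp
  have cU: "card U = n" by simp
  consider (one) X where "xs = [X]" | (two) X Y where "xs = [X, Y]" | (three) X Y V where "xs = [X, Y, V]"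
    using ne xs(3) by (cases xs; cases "tl xs"; cases "tl (tl xs)"; auto)
  then show ?thesis
  proof cases
    case one
    have "X \<in> R" using inR one by simp
    then show ?thesis using pfD[of X] one ck xs(1)[symmetric] by simp
  next
    case two
    have X: "X \<in> R" and Y: "Y \<in> R" using inR two by auto
    have XY: "X \<subset> Y" using xs(2) two by simp
    have YU: "Y \<subseteq> U" using R_sub Y by blast
    have cx: "0 < card X" using R_ne[OF X] R_sub[OF X] by (simp add: card_gt_0_iff finite_subset)
    have cxy: "card X < card Y" using XY YU psubset_card_mono finite_subset by blast
    have t: "2 * card (pf U X \<inter> pf U Y) \<le> card (pf U Y)"
      using pf_two[OF finU _ YU cx cxy] XY by blast
    have fin: "finite (pf U X)" "finite (pf U Y)" by (auto simp: pf_def)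
    have ui: "card (pf U X \<union> pf U Y) + card (pf U X \<inter> pf U Y) = card (pf U X) + card (pf U Y)"
      using card_Un_Int[OF fin] by simp
    have "(\<Union>T\<in>K S. pf U T) = pf U X \<union> pf U Y" using xs(1)[symmetric] two by auto
    moreover have "card (K S) = 2" using ck two by simp
    ultimately show ?thesis using t ui pfD[OF X] pfD[OF Y] by simp
  next
    case three
    have X: "X \<in> R" and Y: "Y \<in> R" and V: "V \<in> R" using inR three by auto
    have XY: "X \<subset> Y" and YV: "Y \<subset> V" and XV: "X \<subset> V" using xs(2) three by auto
    have VU: "V \<subset> U" using R_psub V by blast
    have YU: "Y \<subseteq> U" using VU YV by blast
    have cx: "0 < card Y" using R_ne[OF Y] YU by (simp add: card_gt_0_iff finite_subset)
    have cxy: "card X < card Y" using XY YU psubset_card_mono finite_subset by blast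
    have cyv: "card Y < card V" using YV VU psubset_card_mono finite_subset by blast
    have cvu: "card V < card U" using VU psubset_card_mono by blast
    have XYs: "X \<subseteq> Y" and XVs: "X \<subseteq> V" and VUs: "V \<subseteq> U" using XY XV VU by auto
    have cvn: "card V < card U" using cvu .
    have cyn: "card Y < card U" using cyv cvu by linarith
    have c3: "3 \<le> card U - card X" using cxy cyv cvu by linarith
    have cxv: "card X < card V" using cxy cyv by linarith
    have t1: "3 * card (pf U X \<inter> pf U Y) \<le> card (pf U X)"
      by (rule pf_three[OF finU XYs YU cxy cyn c3])
    have t2: "3 * card (pf U X \<inter> pf U V) \<le> card (pf U X)"
      by (rule pf_three[OF finU XVs VUs cxv cvn c3])
    have t3: "2 * card (pf U Y \<inter> pf U V) \<le> card (pf U V)"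
      using pf_two[OF finU _ VUs cx cyv] YV by blast
    have fin: "finite (pf U X)" "finite (pf U Y)" "finite (pf U V)" by (auto simp: pf_def)
    let ?A = "pf U X" and ?B = "pf U Y" and ?C = "pf U V"
    have u1: "card (?A \<union> (?B \<union> ?C)) + card (?A \<inter> (?B \<union> ?C)) = card ?A + card (?B \<union> ?C)"
      using card_Un_Int[of ?A "?B \<union> ?C"] fin by simp
    have "?A \<inter> (?B \<union> ?C) = (?A \<inter> ?B) \<union> (?A \<inter> ?C)" by blast
    hence u2: "card (?A \<inter> (?B \<union> ?C)) \<le> card (?A \<inter> ?B) + card (?A \<inter> ?C)"
      by (simp add: card_Un_le)
    have u3: "card (?B \<union> ?C) + card (?B \<inter> ?C) = card ?B + card ?C"
      using card_Un_Int[of ?B ?C] fin by simp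
    have "(\<Union>T\<in>K S. pf U T) = ?A \<union> (?B \<union> ?C)" using xs(1)[symmetric] three by auto
    moreover have "card (K S) = 3" using ck three by simp
    ultimately show ?thesis using t1 t2 t3 u1 u2 u3 pfD[OF X] pfD[OF Y] pfD[OF V] by simp
  qed
qed

lemma K_disj:
  assumes "S1 \<in> R" "S2 \<in> R" "K S1 \<noteq> K S2"
  shows "(\<Union>T\<in>K S1. pf U T) \<inter> (\<Union>T\<in>K S2. pf U T) = {}"
proof (rule ccontr)
  assume "\<not> ?thesis"
  then obtain \<sigma> T1 T2 where T: "T1 \<in> K S1" "T2 \<in> K S2" "\<sigma> \<in> pf U T1" "\<sigma> \<in> pf U T2" by blast
  have c: "T1 \<subseteq> T2 \<or> T2 \<subseteq> T1" using pf_cmp[OF T(3,4)] .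
  have T1R: "T1 \<in> R" using T K_sub by blast
  have "T2 \<in> K T1" using c T K_sub by (auto simp: K_def)
  hence "K T2 = K T1" using K_eq[OF T1R] by blast
  moreover have "K T1 = K S1" using K_eq[OF assms(1) T(1)] .
  moreover have "K T2 = K S2" using K_eq[OF assms(2) T(2)] .
  ultimately show False using assms(3) by simp
qed

lemma main_count: "11 * card R \<le> 18 * (n choose (n div 2))"
proof -
  let ?I = "K ` R"
  let ?A = "\<lambda>Kc. \<Union>T\<in>Kc. pf U T"
  have finI: "finite ?I" using finR by simp
  have finA: "\<forall>i\<in>?I. finite (?A i)"
  proof
    fix i assume "i \<in> ?I"
    hence "i \<subseteq> R" using K_sub by blast
    hence "finite i" using finR finite_subset by blast
    thus "finite (?A i)" by (auto simp: pf_def)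
  qed
  have disj: "\<forall>i\<in>?I. \<forall>j\<in>?I. i \<noteq> j \<longrightarrow> ?A i \<inter> ?A j = {}"
    using K_disj by blast
  have "(\<Sum>i\<in>?I. card (?A i)) = card (\<Union> (?A ` ?I))"
    using card_UN_disjoint[OF finI finA disj] by simp
  also have "\<dots> \<le> card (permutations_of_set U)"
    by (rule card_mono) (auto simp: pf_def)
  also have "\<dots> = fact n" by simp
  finally have s1: "(\<Sum>i\<in>?I. card (?A i)) \<le> fact n" .
  have pd: "pairwise disjnt ?I"
    unfolding pairwise_def disjnt_def
  proof (intro ballI impI)
    fix i j assume ij: "i \<in> ?I" "j \<in> ?I" "i \<noteq> j"
    then obtain S1 S2 where S: "S1 \<in> R" "S2 \<in> R" "i = K S1" "j = K S2" by blast
    show "i \<inter> j = {}"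
    proof (rule ccontr)
      assume "i \<inter> j \<noteq> {}"
      then obtain T where T: "T \<in> K S1" "T \<in> K S2" using S by blast
      have "K T = K S1" "K T = K S2" using K_eq S T by blast+
      thus False using ij S by simp
    qed
  qed
  have "\<Union> ?I = R" using K_sub K_self by blast
  hence cR: "card R = (\<Sum>i\<in>?I. card i)"
    using card_Union_disjoint[OF pd] finR K_sub finite_subset by (metis imageE)
  have "11 * card R * DD = (\<Sum>i\<in>?I. 11 * card i * DD)"
    using cR by (simp add: sum_distrib_left sum_distrib_right mult.assoc)
  also have "\<dots> \<le> (\<Sum>i\<in>?I. 18 * card (?A i))"
  proof (rule sum_mono)
    fix i assume "i \<in> ?I"
    then obtain S where "S \<in> R" "i = K S" by blast
    thus "11 * card i * DD \<le> 18 * card (?A i)" using comp_count by blast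
  qed
  also have "\<dots> = 18 * (\<Sum>i\<in>?I. card (?A i))" by (simp add: sum_distrib_left)
  also have "\<dots> \<le> 18 * fact n" using s1 by simp
  also have "fact n = DD * (n choose (n div 2))"
    using binomial_fact_lemma[of "n div 2" n] by (simp add: mult.commute)
  finally have "11 * card R * DD \<le> 18 * (DD * (n choose (n div 2)))" .
  hence "(11 * card R) * DD \<le> (18 * (n choose (n div 2))) * DD" by (simp add: mult_ac)
  moreover have "0 < DD" by simp
  ultimately show ?thesis by (meson mult_le_cancel2 not_gr0)
qed

end



lemma binom_half: "0 < m \<Longrightarrow> m choose (m div 2) \<le> 2 * ((m - 1) choose ((m - 1) div 2))"
proof (cases "m div 2 = 0")
  case True
  assume "0 < m"
  then show ?thesis using True by simp
next
  case False
  assume m: "0 < m"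
  have "m choose (m div 2) = ((m - 1) choose (m div 2 - 1)) + ((m - 1) choose (m div 2))"
    using choose_reduce_nat[OF m] False by simp
  moreover have "(m - 1) choose (m div 2 - 1) \<le> (m - 1) choose ((m - 1) div 2)" by (rule binomial_maximum)
  moreover have "(m - 1) choose (m div 2) \<le> (m - 1) choose ((m - 1) div 2)" by (rule binomial_maximum)
  ultimately show ?thesis by simp
qed

theorem proposition2p14:
  fixes n k :: nat and c :: "nat set \<Rightarrow> nat"
  assumes "n > 2" and "k \<ge> 4"
    and "exact_coloring n k c"
    and "\<not> has_rainbow_B2 n c"
  shows "k \<le> (n choose (n div 2)) + ((n - 1) choose ((n - 1) div 2))
              + ((n - 2) choose ((n - 2) div 2)) + 1"
proof -
  let ?U = "{0..<n}"
  let ?C = "n choose (n div 2)"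
  let ?A = "(n - 1) choose ((n - 1) div 2)"
  let ?B = "(n - 2) choose ((n - 2) div 2)"
  have img: "c ` Pow ?U = {1..k}" using assms(3) by (simp add: exact_coloring_def)
  have h1: "?C \<le> 2 * ?A" using binom_half[of n] assms(1) by simp
  have h2: "?A \<le> 2 * ?B" using binom_half[of "n - 1"] assms(1)
    by (simp add: diff_diff_add numeral_2_eq_2)
  have hn: "n \<le> ?C" using binomial_maximum[of n 1] by simp
  define rep where "rep i = (SOME S. S \<in> Pow ?U \<and> c S = i)" for i
  have rep: "\<And>i. i \<in> {1..k} \<Longrightarrow> rep i \<in> Pow ?U \<and> c (rep i) = i"
  proof -
    fix i assume "i \<in> {1..k}"
    hence "\<exists>S. S \<in> Pow ?U \<and> c S = i" using img by (metis imageE)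
    thus "rep i \<in> Pow ?U \<and> c (rep i) = i" unfolding rep_def by (rule someI_ex)
  qed
  have injrep: "inj_on rep I" if "I \<subseteq> {1..k}" for I
    using rep that by (metis inj_onI subsetD)
  have c0: "c {} \<in> {1..k}" and cU: "c ?U \<in> {1..k}" using img by auto
  show ?thesis
  proof (cases "c {} = c ?U")
    case False
    let ?I = "{1..k} - {c {}, c ?U}"
    let ?Q = "rep ` ?I"
    have cardI: "card ?I = k - 2" using c0 cU False by (simp add: card_Diff_subset)
    have cQ: "card ?Q = k - 2" using card_image[OF injrep[of ?I]] cardI by auto
    have Qp: "S \<subseteq> ?U \<and> c S \<noteq> c {} \<and> c S \<noteq> c ?U" if S: "S \<in> ?Q" for S
    proof -
      obtain i where i: "i \<in> ?I" "S = rep i" using S by blast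
      have "rep i \<in> Pow ?U \<and> c (rep i) = i" using rep i(1) by blast
      thus ?thesis using i by auto
    qed
    have Qinj: "c S \<noteq> c T" if S: "S \<in> ?Q" and T: "T \<in> ?Q" and d: "S \<noteq> T" for S T
    proof -
      obtain i where i: "i \<in> ?I" "S = rep i" using S by blast
      obtain j where j: "j \<in> ?I" "T = rep j" using T by blast
      have "c (rep i) = i" "c (rep j) = j" using rep i(1) j(1) by blast+
      thus ?thesis using i j d by metis
    qed
    have chain: "\<And>S T. S \<in> ?Q \<Longrightarrow> T \<in> ?Q \<Longrightarrow> S \<subseteq> T \<or> T \<subseteq> S"
    proof (rule ccontr)
      fix S T assume S: "S \<in> ?Q" and T: "T \<in> ?Q" and h: "\<not> (S \<subseteq> T \<or> T \<subseteq> S)"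
      have d: "S \<noteq> T" using h by blast
      have e: "c S \<noteq> c T" using Qinj[OF S T d] .
      have pS: "S \<subseteq> ?U" "c S \<noteq> c {}" "c S \<noteq> c ?U" using Qp[OF S] by auto
      have pT: "T \<subseteq> ?U" "c T \<noteq> c {}" "c T \<noteq> c ?U" using Qp[OF T] by auto
      have "S \<noteq> {}" "T \<noteq> {}" "S \<noteq> ?U" "T \<noteq> ?U" using pS pT by auto
      show False
        apply (rule no_rb[OF assms(4), of "{}" S T ?U])
        using pS pT e h False \<open>S \<noteq> {}\<close> \<open>T \<noteq> {}\<close> \<open>S \<noteq> ?U\<close> \<open>T \<noteq> ?U\<close> by auto
    qed
    have injc: "inj_on card ?Q"
    proof (rule inj_onI)
      fix S T assume S: "S \<in> ?Q" and T: "T \<in> ?Q" and e: "card S = card T"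
      have fS: "finite S" "finite T" using Qp[OF S] Qp[OF T] finite_subset by blast+
      show "S = T" using chain[OF S T] card_subset_eq fS e by metis
    qed
    have sub: "card ` ?Q \<subseteq> {1..<n}"
    proof
      fix x assume "x \<in> card ` ?Q"
      then obtain S where S: "S \<in> ?Q" "x = card S" by blast
      have p: "S \<subseteq> ?U" "c S \<noteq> c {}" "c S \<noteq> c ?U" using Qp[OF S(1)] by auto
      have fS: "finite S" using p finite_subset by blast
      have "S \<noteq> {}" using p by auto
      hence "0 < card S" using fS by (simp add: card_gt_0_iff)
      moreover have "S \<subset> ?U" using p by auto
      hence "card S < n" using psubset_card_mono[of ?U S] by simp
      ultimately show "x \<in> {1..<n}" using S by simp
    qed
    have "card ?Q = card (card ` ?Q)" using card_image[OF injc] by simp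
    also have "\<dots> \<le> card {1..<n}" by (rule card_mono[OF _ sub]) simp
    finally have "k - 2 \<le> n - 1" using cQ by simp
    thus ?thesis using hn assms(1) by linarith
  next
    case True
    let ?I = "{1..k} - {c {}}"
    define R where "R = rep ` ?I"
    have cardI: "card ?I = k - 1" using c0 by simp
    have cR: "card R = k - 1" using card_image[OF injrep[of ?I]] cardI R_def by auto
    interpret setting n c R
    proof
      show "\<not> has_rainbow_B2 n c" by (rule assms(4))
      show "S \<subseteq> ?U" if S: "S \<in> R" for S
      proof -
        obtain i where i: "i \<in> ?I" "S = rep i" using S R_def by blast
        thus ?thesis using rep[of i] by blast
      qed
      show "c S \<noteq> c {}" if S: "S \<in> R" for S
      proof -
        obtain i where i: "i \<in> ?I" "S = rep i" using S R_def by blast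
        thus ?thesis using rep[of i] by auto
      qed
      show "c ?U = c {}" using True by simp
      show "c S \<noteq> c T" if S: "S \<in> R" and T: "T \<in> R" and d: "S \<noteq> T" for S T
      proof -
        obtain i where i: "i \<in> ?I" "S = rep i" using S R_def by blast
        obtain j where j: "j \<in> ?I" "T = rep j" using T R_def by blast
        have "c (rep i) = i" "c (rep j) = j" using rep i(1) j(1) by blast+
        thus ?thesis using i j d by metis
      qed
    qed
    have "11 * (k - 1) \<le> 18 * ?C" using main_count cR by simp
    thus ?thesis using h1 h2 assms(2) by linarith
  qed
qed


end
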